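(* Consider a run of Algorithm 1 (described in the context) against an adversary making at most $C$ corruptions. The total absolute loss $\sum |f(x_t)-q_t|$ over all rounds $t$ lying in corrupted intervals is at most $L\cdot O(C\log T)$, with an absolute constant.
   Context: Problem. Fix $L>0$ and $T\ge 2$. An adversary fixes an unknown $L$-Lipschitz $f:[0,1]\to[0,L]$. In each round $t=1,\dots,T$: the adversary chooses $x_t\in[0,1]$; the learner observes $x_t$ and guesses $q_t$; the adversary observes $q_t$ and sends $\sigma_t\in\{0,1\}$, equal to $\sigma(q_t-f(x_t))$ in uncorrupted rounds and $1-\sigma(q_t-f(x_t))$ in corrupted rounds, where $\sigma(u)=1$ if $u>0$ and $0$ if $u\le 0$; the adversary chooses adaptively which rounds to corrupt, at most $C$ in total ($C$ unknown to the learner). The absolute loss of round $t$ is $|f(x_t)-q_t|$. $\mathtt{len}(I)$ is the length of an interval $I$. $\mathtt{MidpointQuery}(I,Y)$, $Y=[a,b]$: guess $q=(a+b)/2$; if $\sigma_t=1$ return $Y\cap[0,q+L\,\mathtt{len}(I)]$, if $\sigma_t=0$ return $Y\cap[q-L\,\mathtt{len}(I),L]$. Algorithm 1. Maintain a partition of $[0,1]$ into intervals; each $I_j$ carries a checking interval $S_j$, range $Y_j$, and a "dubious" flag (initially unset). Initially: $8$ intervals of length $1/8$ (the root intervals), each with $S_j=Y_j=[0,L]$. In round $t$, with $I_j$ the partition interval containing $x_t$: (i) if some endpoint of $S_j$ has not been guessed in a round whose context lay in $I_j$, guess such an endpoint; if the guess was $\min(S_j)$ with $\sigma_t=1$ or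 $\max(S_j)$ with $\sigma_t=0$, mark $I_j$ dubious; once both endpoints have been queried, set $Y_j=[0,L]$ if dubious and otherwise $Y_j=[\min(S_j)-L\,\mathtt{len}(I_j),\max(S_j)+L\,\mathtt{len}(I_j)]\cap[0,L]$. (ii) Otherwise set $Y_j:=\mathtt{MidpointQuery}(I_j,Y_j)$; if then $\mathtt{len}(Y_j)<\max(4L\,\mathtt{len}(I_j),4L/T)$, bisect $I_j$ into its two halves (its children), which replace it, each with checking interval equal to the current $Y_j$ (endpoints unqueried, not dubious). Interval types. Say a round $t$ lies in $I_j$ if $I_j$ is the partition interval containing $x_t$ at round $t$. An interval $I_j$ is corrupted if some round lying in $I_j$ has a corrupted signal. *)

theory Defs
  imports "HOL-Analysis.Analysis"
begin

text \<open>A node of the partition: the interval [lo,hi], its checking interval S = [smin,smax],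
  its range Y = [ymin,ymax], flags telling whether min S / max S have been guessed in a
  round lying in this interval, and the dubious flag.\<close>
record node =
  lo :: real
  hi :: real
  smin :: real
  smax :: real
  ymin :: real
  ymax :: real
  qmin :: bool
  qmax :: bool
  dub :: bool

type_synonym hist = "(real \<times> real \<times> bool) list"  \<comment> \<open>(x_s, q_s, sigma_s) of past rounds\<close>

definition fresh_node :: "real \<Rightarrow> real \<Rightarrow> real \<Rightarrow> real \<Rightarrow> node" where
  "fresh_node a b y1 y2 = \<lparr>lo = a, hi = b, smin = y1, smax = y2, ymin = y1, ymax = y2,
      qmin = False, qmax = False, dub = False\<rparr>"

definition init_partition :: "real \<Rightarrow> node list" where
  "init_partition L = map (\<lambda>k. fresh_node (real k / 8) (real (Suc k) / 8) 0 L) [0..<8]"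

definition contains :: "node \<Rightarrow> real \<Rightarrow> bool" where
  "contains n x \<longleftrightarrow> lo n \<le> x \<and> (x < hi n \<or> (hi n = 1 \<and> x = 1))"

definition find_node :: "node list \<Rightarrow> real \<Rightarrow> nat" where
  "find_node P x = (LEAST i. i < length P \<and> contains (P ! i) x)"

text \<open>The learner's guess. pk resolves the choice in step (i) when both endpoints
  of S are still unguessed (True: guess min S, False: guess max S).\<close>
definition guess :: "node \<Rightarrow> bool \<Rightarrow> real" where
  "guess n pk =
     (if \<not> qmin n \<and> \<not> qmax n then (if pk then smin n else smax n)
      else if \<not> qmin n then smin n
      else if \<not> qmax n then smax n
      else (ymin n + ymax n) / 2)"

definition update :: "real \<Rightarrow> nat \<Rightarrow> node \<Rightarrow> real \<Rightarrow> bool \<Rightarrow> node list" where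
  "update L T n q sg =
     (let len = hi n - lo n in
      if \<not> (qmin n \<and> qmax n) then
        (let n1 = n\<lparr>qmin := (qmin n \<or> q = smin n), qmax := (qmax n \<or> q = smax n),
                    dub := (dub n \<or> (q = smin n \<and> sg) \<or> (q = smax n \<and> \<not> sg))\<rparr> in
         if qmin n1 \<and> qmax n1 then
           (if dub n1 then [n1\<lparr>ymin := 0, ymax := L\<rparr>]
            else [n1\<lparr>ymin := max (smin n1 - L * len) 0, ymax := min (smax n1 + L * len) L\<rparr>])
         else [n1])
      else
        (let y1' = (if sg then max (ymin n) 0 else max (ymin n) (q - L * len));
             y2' = (if sg then min (ymax n) (q + L * len) else min (ymax n) L) in
         if y2' - y1' < max (4 * L * len) (4 * L / real T) then
           [fresh_node (lo n) ((lo n + hi n) / 2) y1' y2',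
            fresh_node ((lo n + hi n) / 2) (hi n) y1' y2']
         else [n\<lparr>ymin := y1', ymax := y2'\<rparr>]))"

definition sgn_fb :: "real \<Rightarrow> bool" where
  "sgn_fb u \<longleftrightarrow> u > 0"

text \<open>Adversary: X chooses the context from the history, Cor
  decides (after seeing the context and the guess) whether to corrupt the signal.
  run ... t is the state (partition, history) before round t+1.\<close>
fun run :: "real \<Rightarrow> nat \<Rightarrow> (real \<Rightarrow> real) \<Rightarrow> (hist \<Rightarrow> real) \<Rightarrow> (hist \<Rightarrow> real \<Rightarrow> real \<Rightarrow> bool)
              \<Rightarrow> (hist \<Rightarrow> bool) \<Rightarrow> nat \<Rightarrow> node list \<times> hist" where
  "run L T f X Cor pick 0 = (init_partition L, [])"
| "run L T f X Cor pick (Suc t) =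
     (let (P, h) = run L T f X Cor pick t;
          x = X h; i = find_node P x; n = P ! i; q = guess n (pick h);
          sg = (if Cor h x q then \<not> sgn_fb (q - f x) else sgn_fb (q - f x))
      in (take i P @ update L T n q sg @ drop (Suc i) P, h @ [(x, q, sg)]))"

text \<open>Quantities of round t+1 (t = 0,...,T-1).\<close>
definition ctx :: "real \<Rightarrow> nat \<Rightarrow> (real \<Rightarrow> real) \<Rightarrow> (hist \<Rightarrow> real) \<Rightarrow> (hist \<Rightarrow> real \<Rightarrow> real \<Rightarrow> bool)
              \<Rightarrow> (hist \<Rightarrow> bool) \<Rightarrow> nat \<Rightarrow> real" where
  "ctx L T f X Cor pick t = X (snd (run L T f X Cor pick t))"

definition cur_node :: "real \<Rightarrow> nat \<Rightarrow> (real \<Rightarrow> real) \<Rightarrow> (hist \<Rightarrow> real) \<Rightarrow> (hist \<Rightarrow> real \<Rightarrow> real \<Rightarrow> bool)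
              \<Rightarrow> (hist \<Rightarrow> bool) \<Rightarrow> nat \<Rightarrow> node" where
  "cur_node L T f X Cor pick t =
     (let P = fst (run L T f X Cor pick t) in P ! find_node P (ctx L T f X Cor pick t))"

definition round_interval :: "real \<Rightarrow> nat \<Rightarrow> (real \<Rightarrow> real) \<Rightarrow> (hist \<Rightarrow> real) \<Rightarrow> (hist \<Rightarrow> real \<Rightarrow> real \<Rightarrow> bool)
              \<Rightarrow> (hist \<Rightarrow> bool) \<Rightarrow> nat \<Rightarrow> real \<times> real" where
  "round_interval L T f X Cor pick t =
     (let n = cur_node L T f X Cor pick t in (lo n, hi n))"

definition round_guess :: "real \<Rightarrow> nat \<Rightarrow> (real \<Rightarrow> real) \<Rightarrow> (hist \<Rightarrow> real) \<Rightarrow> (hist \<Rightarrow> real \<Rightarrow> real \<Rightarrow> bool)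
              \<Rightarrow> (hist \<Rightarrow> bool) \<Rightarrow> nat \<Rightarrow> real" where
  "round_guess L T f X Cor pick t =
     guess (cur_node L T f X Cor pick t) (pick (snd (run L T f X Cor pick t)))"

definition round_corrupted :: "real \<Rightarrow> nat \<Rightarrow> (real \<Rightarrow> real) \<Rightarrow> (hist \<Rightarrow> real) \<Rightarrow> (hist \<Rightarrow> real \<Rightarrow> real \<Rightarrow> bool)
              \<Rightarrow> (hist \<Rightarrow> bool) \<Rightarrow> nat \<Rightarrow> bool" where
  "round_corrupted L T f X Cor pick t \<longleftrightarrow>
     Cor (snd (run L T f X Cor pick t)) (ctx L T f X Cor pick t) (round_guess L T f X Cor pick t)"

definition in_corrupted_interval :: "real \<Rightarrow> nat \<Rightarrow> (real \<Rightarrow> real) \<Rightarrow> (hist \<Rightarrow> real) \<Rightarrow> (hist \<Rightarrow> real \<Rightarrow> real \<Rightarrow> bool)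
              \<Rightarrow> (hist \<Rightarrow> bool) \<Rightarrow> nat \<Rightarrow> bool" where
  "in_corrupted_interval L T f X Cor pick t \<longleftrightarrow>
     (\<exists>s<T. round_interval L T f X Cor pick s = round_interval L T f X Cor pick t
            \<and> round_corrupted L T f X Cor pick s)"

end

theory Submission
  imports Defs
begin


fun tiles :: "real \<Rightarrow> real \<Rightarrow> node list \<Rightarrow> bool" where
  "tiles a b [] = (a = b)"
| "tiles a b (n # ns) = (lo n = a \<and> lo n < hi n \<and> tiles (hi n) b ns)"

lemma tiles_append: "tiles a b (xs @ ys) = (\<exists>c. tiles a c xs \<and> tiles c b ys)"
  by (induction xs arbitrary: a) auto

lemma tiles_le: "tiles a b P \<Longrightarrow> a \<le> b"
  by (induction P arbitrary: a) fastforce+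

lemma tiles_bounds: "tiles a b P \<Longrightarrow> n \<in> set P \<Longrightarrow> a \<le> lo n \<and> hi n \<le> b \<and> lo n < hi n"
proof (induction P arbitrary: a)
  case Nil then show ?case by simp
next
  case (Cons z zs)
  then show ?case using tiles_le[of "hi z" b zs] by force
qed

lemma tiles_cover: "tiles a b P \<Longrightarrow> a \<le> x \<Longrightarrow> x < b \<Longrightarrow> \<exists>i<length P. lo (P!i) \<le> x \<and> x < hi (P!i)"
proof (induction P arbitrary: a)
  case Nil then show ?case by simp
next
  case (Cons z zs)
  show ?case
  proof (cases "x < hi z")
    case True then show ?thesis using Cons.prems by (intro exI[of _ 0]) auto
  next
    case False
    then obtain i where "i < length zs" "lo (zs!i) \<le> x \<and> x < hi (zs!i)"
      using Cons.IH[of "hi z"] Cons.prems by auto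
    then show ?thesis by (intro exI[of _ "Suc i"]) auto
  qed
qed

lemma tiles_last: "tiles a b P \<Longrightarrow> a < b \<Longrightarrow> P \<noteq> [] \<and> hi (last P) = b"
proof (induction P arbitrary: a)
  case Nil then show ?case by simp
next
  case (Cons z zs)
  show ?case
  proof (cases zs)
    case Nil then show ?thesis using Cons.prems by simp
  next
    case (Cons w ws)
    then have "hi z < b" using Cons.prems tiles_le[of "hi w" b ws] by auto
    then show ?thesis using Cons.IH Cons.prems \<open>zs = w # ws\<close> by auto
  qed
qed

lemma tiles_find:
  assumes "tiles 0 1 P" "0 \<le> x" "x \<le> 1"
  shows "find_node P x < length P \<and> contains (P ! find_node P x) x"
proof -
  have "\<exists>i. i < length P \<and> contains (P!i) x"
  proof (cases "x < 1")
    case True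
    then show ?thesis using tiles_cover[OF assms(1) assms(2)] unfolding contains_def by auto
  next
    case False
    then have x1: "x = 1" using assms by auto
    have ne: "P \<noteq> []" and hl: "hi (last P) = 1" using tiles_last[OF assms(1)] by auto
    have "last P \<in> set P" using ne by simp
    then have "lo (last P) < 1" using tiles_bounds[OF assms(1)] hl by force
    then show ?thesis using ne hl x1 unfolding contains_def
      by (intro exI[of _ "length P - 1"]) (auto simp: last_conv_nth)
  qed
  then show ?thesis unfolding find_node_def by (rule LeastI_ex)
qed

definition key :: "node \<Rightarrow> real \<times> real" where "key n = (lo n, hi n)"

definition V :: "real \<Rightarrow> node \<Rightarrow> bool" where
  "V L n \<longleftrightarrow> 0 \<le> smin n \<and> smin n \<le> L \<and> 0 \<le> smax n \<and> smax n \<le> L \<and>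
     0 \<le> ymin n \<and> ymin n \<le> L \<and> 0 \<le> ymax n \<and> ymax n \<le> L"

definition R :: "real \<Rightarrow> nat \<Rightarrow> node \<Rightarrow> nat \<Rightarrow> bool" where
  "R L T n c \<longleftrightarrow> ((\<not> qmin n \<and> \<not> qmax n) \<longrightarrow> c = 0) \<and> (\<not> (qmin n \<and> qmax n) \<longrightarrow> c \<le> 1) \<and>
     ((qmin n \<and> qmax n) \<longrightarrow> (\<exists>m. c \<le> 2 + m \<and> ymax n - ymin n \<le> L / 2^m + 2 * L * (hi n - lo n) \<and>
        (m > 0 \<longrightarrow> ymax n - ymin n \<ge> max (4 * L * (hi n - lo n)) (4 * L / real T))))"

lemma guess_range: "V L n \<Longrightarrow> 0 \<le> guess n pk \<and> guess n pk \<le> L"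
  unfolding V_def guess_def by auto

lemma pow_lt:
  fixes L l d :: real
  assumes "L > 0" "T \<ge> 2" "l > 0" "d \<le> L / 2^m + 2 * L * l" "d \<ge> max (4 * L * l) (4 * L / real T)"
  shows "real m < log 2 (real T)"
proof -
  have "(2::real)^m < real T"
  proof (rule ccontr)
    assume "\<not> (2::real)^m < real T"
    then have h: "real T \<le> 2^m" by simp
    have Tp: "real T > 0" using assms by simp
    have "L / 2^m \<le> L / real T" using h Tp assms(1) by (intro divide_left_mono) auto
    show False
    proof (cases "l * real T \<ge> 1")
      case True
      then have "L / real T \<le> L * l" using Tp assms(1)
        by (simp add: divide_le_eq mult.assoc mult_le_cancel_left1) 
      moreover have "4 * L * l = 4 * (L * l)" "2 * L * l = 2 * (L * l)" by simp_all
      moreover have "L * l > 0" using assms by simp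
      moreover have "4 * L * l \<le> d" using assms(5) by simp
      ultimately show ?thesis using assms(4) `L / 2^m \<le> L / real T` by linarith
    next
      case False
      then have "L * l < L / real T" using Tp assms(1)
        by (simp add: less_divide_eq mult.assoc)
      moreover have "4 * L / real T \<le> d" using assms(5) by simp
      moreover have "4 * L / real T = 4 * (L / real T)" "2 * L * l = 2 * (L * l)" by simp_all
      moreover have "L / real T > 0" using assms Tp by simp
      ultimately show ?thesis using assms(4) `L / 2^m \<le> L / real T` by linarith
    qed
  qed
  then have "log 2 (2^m) < log 2 (real T)" by (intro log_less) auto
  then show ?thesis by (simp add: log_nat_power)
qed

lemma R_bound:
  assumes "L > 0" "T \<ge> 2" "lo n < hi n" "R L T n c"
  shows "real c \<le> 2 + log 2 (real T)"
proof -
  have lg: "log 2 (real T) \<ge> 1" using assms(2) by (simp add: le_log_iff)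
  show ?thesis
  proof (cases "qmin n \<and> qmax n")
    case False then show ?thesis using assms(4) lg unfolding R_def by auto
  next
    case True
    then obtain m where m: "c \<le> 2 + m" "ymax n - ymin n \<le> L / 2^m + 2 * L * (hi n - lo n)"
      "m > 0 \<longrightarrow> ymax n - ymin n \<ge> max (4 * L * (hi n - lo n)) (4 * L / real T)"
      using assms(4) unfolding R_def by blast
    show ?thesis
    proof (cases "m = 0")
      case True then show ?thesis using m lg by simp
    next
      case False
      then have "real m < log 2 (real T)" using pow_lt[OF assms(1,2) _ m(2)] m(3) assms(3) by simp
      then show ?thesis using m(1) by linarith
    qed
  qed
qed



lemma upd_end:
  assumes nb: "\<not> (qmin m \<and> qmax m)" and v: "V L m" and r: "R L T m c" and lh: "lo m < hi m" and L: "L > 0"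
  shows "\<exists>n'. update L T m (guess m pk) sg = [n'] \<and> lo n' = lo m \<and> hi n' = hi m \<and> V L n' \<and> R L T n' (Suc c)"
proof -
  define q where "q = guess m pk"
  define n1 where "n1 = m\<lparr>qmin := (qmin m \<or> q = smin m), qmax := (qmax m \<or> q = smax m),
                    dub := (dub m \<or> (q = smin m \<and> sg) \<or> (q = smax m \<and> \<not> sg))\<rparr>"
  define len where "len = hi m - lo m"
  define n' where "n' = (if qmin n1 \<and> qmax n1 then
           (if dub n1 then n1\<lparr>ymin := 0, ymax := L\<rparr>
            else n1\<lparr>ymin := max (smin n1 - L * len) 0, ymax := min (smax n1 + L * len) L\<rparr>)
         else n1)"
  have u: "update L T m q sg = [n']"
    using nb unfolding update_def n'_def n1_def len_def Let_def by simp
  have lh': "lo n' = lo m" "hi n' = hi m" unfolding n'_def n1_def by auto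
  have fl: "qmin n' = (qmin m \<or> q = smin m)" "qmax n' = (qmax m \<or> q = smax m)"
    unfolding n'_def n1_def by auto
  have lenp: "L * len \<ge> 0" using L lh unfolding len_def by simp
  have V': "V L n'" using v lenp unfolding V_def n'_def n1_def by auto
  have prog: "qmin n' \<or> qmax n'"
    using nb unfolding fl q_def guess_def by auto
  have prog2: "qmin m \<or> qmax m \<Longrightarrow> qmin n' \<and> qmax n'"
    using nb unfolding fl q_def guess_def by auto
  have c1: "c \<le> 1" using r nb unfolding R_def by auto
  have R': "R L T n' (Suc c)"
  proof (cases "qmin n' \<and> qmax n'")
    case True
    have "ymax n' - ymin n' \<le> L / 2^0 + 2 * L * (hi n' - lo n')"
    proof -
      have "0 \<le> 2 * L * (hi m - lo m)" using lh L by simp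
      then show ?thesis using V' lh' unfolding V_def by simp
    qed
    then show ?thesis using True c1 unfolding R_def by (intro conjI impI; (simp; fail)?) (rule exI[of _ 0]; simp)
  next
    case False
    then have "\<not> qmin m \<and> \<not> qmax m" using prog2 by blast
    then have "c = 0" using r unfolding R_def by auto
    then show ?thesis using False prog unfolding R_def by auto
  qed
  show ?thesis using u lh' V' R' unfolding q_def by blast
qed

lemma upd_mid:
  assumes b: "qmin m" "qmax m" and v: "V L m" and r: "R L T m c" and lh: "lo m < hi m" and L: "L > 0"
    and T: "T \<ge> 2"
  shows "(\<exists>n'. update L T m (guess m pk) sg = [n'] \<and> lo n' = lo m \<and> hi n' = hi m \<and> V L n' \<and> R L T n' (Suc c))
    \<or> (\<exists>c1 c2. update L T m (guess m pk) sg = [c1, c2] \<and> tiles (lo m) (hi m) [c1, c2] \<and>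
         V L c1 \<and> V L c2 \<and> R L T c1 0 \<and> R L T c2 0 \<and> real (Suc c) \<le> 3 + log 2 (real T))"
proof -
  define len where "len = hi m - lo m"
  define q where "q = (ymin m + ymax m) / 2"
  define y1 where "y1 = (if sg then max (ymin m) 0 else max (ymin m) (q - L * len))"
  define y2 where "y2 = (if sg then min (ymax m) (q + L * len) else min (ymax m) L)"
  have g: "guess m pk = q" using b unfolding guess_def q_def by simp
  have u: "update L T m (guess m pk) sg = (if y2 - y1 < max (4 * L * len) (4 * L / real T) then
           [fresh_node (lo m) ((lo m + hi m) / 2) y1 y2,
            fresh_node ((lo m + hi m) / 2) (hi m) y1 y2]
         else [m\<lparr>ymin := y1, ymax := y2\<rparr>])"
    unfolding g update_def Let_def using b unfolding y1_def y2_def len_def by simp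
  have lenp: "L * len > 0" using L lh unfolding len_def by simp
  have dd: "y2 - y1 \<le> (ymax m - ymin m) / 2 + L * len"
  proof -
    have "y2 \<le> (if sg then q + L * len else ymax m)" unfolding y2_def by auto
    moreover have "y1 \<ge> (if sg then ymin m else q - L * len)" unfolding y1_def by auto
    ultimately show ?thesis unfolding q_def by (cases sg) (auto simp: field_simps)
  qed
  have vy: "0 \<le> y1" "y1 \<le> L" "0 \<le> y2" "y2 \<le> L"
    using v lenp unfolding V_def y1_def y2_def q_def by (auto simp: field_simps)
  obtain mm where mm: "c \<le> 2 + mm" "ymax m - ymin m \<le> L / 2^mm + 2 * L * (hi m - lo m)"
    using r b unfolding R_def by blast
  show ?thesis
  proof (cases "y2 - y1 < max (4 * L * len) (4 * L / real T)")
    case True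
    have rb: "real c \<le> 2 + log 2 (real T)" using R_bound[OF L T lh r] .
    have "tiles (lo m) (hi m) [fresh_node (lo m) ((lo m + hi m) / 2) y1 y2,
            fresh_node ((lo m + hi m) / 2) (hi m) y1 y2]" using lh by (simp add: fresh_node_def)
    moreover have "V L (fresh_node a b y1 y2)" for a b using vy by (simp add: V_def fresh_node_def)
    moreover have "R L T (fresh_node a b y1 y2) 0" for a b by (simp add: R_def fresh_node_def)
    ultimately show ?thesis using True u rb by auto
  next
    case False
    define n' where "n' = m\<lparr>ymin := y1, ymax := y2\<rparr>"
    have "y2 - y1 \<le> L / 2^(Suc mm) + 2 * L * (hi m - lo m)"
    proof -
      have e1: "L / 2^(Suc mm) = (L/2^mm)/2" by simp
      have e2: "2*L*(hi m - lo m) = 2*(L*len)" by (simp add: len_def)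
      have "\<And>A D E. y2 - y1 \<le> D / 2 + E \<Longrightarrow> D \<le> A + 2 * E \<Longrightarrow> y2 - y1 \<le> A / 2 + 2 * E"
        by linarith
      then have "y2 - y1 \<le> (L/2^mm)/2 + 2*(L*len)" using dd mm(2) unfolding e2 by blast
      then show ?thesis by (simp only: e1 e2)
    qed
    then have "R L T n' (Suc c)" using False mm(1) b unfolding R_def n'_def len_def
      by (intro conjI impI; (simp; fail)?) (rule exI[of _ "Suc mm"]; simp add: not_less)
    moreover have "V L n'" using v vy unfolding V_def n'_def by simp
    ultimately show ?thesis using False u unfolding n'_def by auto
  qed
qed

lemma upd:
  assumes v: "V L m" and r: "R L T m c" and lh: "lo m < hi m" and L: "L > 0" and T: "T \<ge> 2"
  shows "(\<exists>n'. update L T m (guess m pk) sg = [n'] \<and> lo n' = lo m \<and> hi n' = hi m \<and> V L n' \<and> R L T n' (Suc c))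
    \<or> (\<exists>c1 c2. update L T m (guess m pk) sg = [c1, c2] \<and> tiles (lo m) (hi m) [c1, c2] \<and>
         V L c1 \<and> V L c2 \<and> R L T c1 0 \<and> R L T c2 0 \<and> real (Suc c) \<le> 3 + log 2 (real T))"
  using upd_end[OF _ v r lh L] upd_mid[OF _ _ v r lh L T] by blast



context
  fixes L :: real and T :: nat and f :: "real \<Rightarrow> real" and X :: "hist \<Rightarrow> real"
    and Cor :: "hist \<Rightarrow> real \<Rightarrow> real \<Rightarrow> bool" and pick :: "hist \<Rightarrow> bool"
  assumes Lpos: "L > 0" and T2: "T \<ge> 2" and Xr: "\<forall>h. X h \<in> {0..1}"
begin

abbreviation "PP t \<equiv> fst (run L T f X Cor pick t)"
abbreviation "HH t \<equiv> snd (run L T f X Cor pick t)"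
abbreviation "ri t \<equiv> round_interval L T f X Cor pick t"
abbreviation "cnt t k \<equiv> card {s. s < t \<and> ri s = k}"

lemma run_step:
  "\<exists>sg. PP (Suc t) = take (find_node (PP t) (X (HH t))) (PP t) @
     update L T (PP t ! find_node (PP t) (X (HH t))) (guess (PP t ! find_node (PP t) (X (HH t))) (pick (HH t))) sg
     @ drop (Suc (find_node (PP t) (X (HH t)))) (PP t)"
proof -
  obtain P h where e: "run L T f X Cor pick t = (P, h)" by (cases "run L T f X Cor pick t")
  show ?thesis by (simp add: e Let_def) blast
qed

lemma ri_eq: "ri t = key (PP t ! find_node (PP t) (X (HH t)))"
  by (simp add: round_interval_def cur_node_def ctx_def key_def Let_def)

lemma cnt_Suc: "cnt (Suc t) k = cnt t k + (if ri t = k then 1 else 0)"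
proof -
  have "{s. s < Suc t \<and> ri s = k} = (if ri t = k then insert t {s. s < t \<and> ri s = k} else {s. s < t \<and> ri s = k})"
    by (auto simp: less_Suc_eq)
  then show ?thesis by simp
qed

lemma init_tiles: "tiles 0 1 (init_partition L)"
  by (simp add: init_partition_def fresh_node_def upt_rec)

lemma init_set: "n \<in> set (init_partition L) \<Longrightarrow> V L n \<and> R L T n 0"
  using Lpos by (auto simp: init_partition_def fresh_node_def V_def R_def)

lemma invar:
  "tiles 0 1 (PP t) \<and> (\<forall>n\<in>set (PP t). V L n \<and> R L T n (cnt t (key n))) \<and>
   (\<forall>k. cnt t k > 0 \<longrightarrow> (\<exists>n\<in>set (PP t). key n = k) \<or> (\<forall>n\<in>set (PP t). \<not> (lo n \<le> fst k \<and> snd k \<le> hi n))) \<and>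
   (\<forall>k. real (cnt t k) \<le> 3 + log 2 (real T))"
proof (induction t)
  case 0
  have lg: "log 2 (real T) \<ge> 0" using T2 by simp
  show ?case using init_tiles init_set lg by simp
next
  case (Suc t)
  define P where "P = PP t"
  define h where "h = HH t"
  define x where "x = X h"
  define i where "i = find_node P x"
  define m where "m = P ! i"
  have tl: "tiles 0 1 P" and A: "\<forall>n\<in>set P. V L n \<and> R L T n (cnt t (key n))"
    and D: "\<forall>k. cnt t k > 0 \<longrightarrow> (\<exists>n\<in>set P. key n = k) \<or> (\<forall>n\<in>set P. \<not> (lo n \<le> fst k \<and> snd k \<le> hi n))"
    and B: "\<forall>k. real (cnt t k) \<le> 3 + log 2 (real T)"
    using Suc.IH unfolding P_def by auto
  have x01: "0 \<le> x" "x \<le> 1" using Xr unfolding x_def by auto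
  have fi: "i < length P" using tiles_find[OF tl x01] unfolding i_def by auto
  obtain sg where P': "PP (Suc t) = take i P @ update L T m (guess m (pick h)) sg @ drop (Suc i) P"
    using run_step[of t] unfolding P_def h_def x_def i_def m_def by blast
  have riT: "ri t = key m" using ri_eq[of t] unfolding P_def h_def x_def i_def m_def by simp
  have cS: "\<And>k. cnt (Suc t) k = cnt t k + (if key m = k then 1 else 0)"
    using cnt_Suc riT by simp
  have dec: "P = take i P @ [m] @ drop (Suc i) P"
    using id_take_nth_drop[OF fi] unfolding m_def by simp
  obtain a b where ta: "tiles 0 a (take i P)" and tm: "tiles a b [m]" and td: "tiles b 1 (drop (Suc i) P)"
    using tl dec tiles_append by metis
  have ab: "a = lo m" "b = hi m" and lm: "lo m < hi m" using tm by auto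
  define Oth where "Oth = set (take i P) \<union> set (drop (Suc i) P)"
  have setP: "set P = Oth \<union> {m}" using dec unfolding Oth_def by (metis Un_insert_right append_Cons append_Nil set_append set_simps(2) sup_bot_right Un_commute Un_insert_left sup_commute)
  have Osep: "\<And>n. n \<in> Oth \<Longrightarrow> (hi n \<le> lo m \<or> hi m \<le> lo n) \<and> lo n < hi n"
    using tiles_bounds[OF ta] tiles_bounds[OF td] ab unfolding Oth_def by fastforce
  have Okey: "\<And>n. n \<in> Oth \<Longrightarrow> key n \<noteq> key m"
    using Osep lm unfolding key_def by fastforce
  have Onc: "\<And>n. n \<in> Oth \<Longrightarrow> \<not> (lo n \<le> lo m \<and> hi m \<le> hi n)"
    using Osep lm by fastforce
  have OP: "Oth \<subseteq> set P" using setP by blast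
  have mP: "m \<in> set P" using setP by blast
  have vm: "V L m" and rm: "R L T m (cnt t (key m))" using A mP by auto
  have new0: "cnt t (key z) = 0" if z: "lo m \<le> lo z" "hi z \<le> hi m" "lo z < hi z" "key z \<noteq> key m" for z
  proof (rule ccontr)
    assume "cnt t (key z) \<noteq> 0"
    then have "cnt t (key z) > 0" using neq0_conv by blast
    then have "(\<exists>n\<in>set P. key n = key z) \<or> (\<forall>n\<in>set P. \<not> (lo n \<le> fst (key z) \<and> snd (key z) \<le> hi n))"
      using D by blast
    then show False
    proof
      assume "\<exists>n\<in>set P. key n = key z"
      then obtain n where n: "n \<in> set P" "key n = key z" by blast
      then have "n \<noteq> m" using z by auto
      then have "n \<in> Oth" using n setP by blast
      then show False using Osep[of n] n z unfolding key_def by auto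
    next
      assume "\<forall>n\<in>set P. \<not> (lo n \<le> fst (key z) \<and> snd (key z) \<le> hi n)"
      then show False using mP z unfolding key_def by auto
    qed
  qed
  have lg: "log 2 (real T) \<ge> 0" using T2 by simp
  from upd[OF vm rm lm Lpos T2, of "pick h" sg]
  show ?case
  proof
    assume "\<exists>n'. update L T m (guess m (pick h)) sg = [n'] \<and> lo n' = lo m \<and> hi n' = hi m \<and> V L n' \<and> R L T n' (Suc (cnt t (key m)))"
    then obtain n' where u: "update L T m (guess m (pick h)) sg = [n']" and n': "lo n' = lo m" "hi n' = hi m"
      "V L n'" "R L T n' (Suc (cnt t (key m)))" by blast
    have kn: "key n' = key m" using n' unfolding key_def by simp
    have P2: "PP (Suc t) = take i P @ [n'] @ drop (Suc i) P" using P' u by simp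
    have setP2: "set (PP (Suc t)) = Oth \<union> {n'}" unfolding P2 Oth_def by auto
    have T1: "tiles 0 1 (PP (Suc t))" unfolding P2 tiles_append using ta td ab n' lm by auto
    have A1: "\<forall>n\<in>set (PP (Suc t)). V L n \<and> R L T n (cnt (Suc t) (key n))"
    proof
      fix n assume "n \<in> set (PP (Suc t))"
      then have "n \<in> Oth \<or> n = n'" using setP2 by blast
      then show "V L n \<and> R L T n (cnt (Suc t) (key n))"
      proof
        assume nO: "n \<in> Oth"
        then have "cnt (Suc t) (key n) = cnt t (key n)" using cS Okey[OF nO] by simp
        then show ?thesis using A OP nO by auto
      next
        assume "n = n'"
        then show ?thesis using n' cS kn by simp
      qed
    qed
    have D1: "\<forall>k. cnt (Suc t) k > 0 \<longrightarrow> (\<exists>n\<in>set (PP (Suc t)). key n = k) \<or> (\<forall>n\<in>set (PP (Suc t)). \<not> (lo n \<le> fst k \<and> snd k \<le> hi n))"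
    proof (intro allI impI)
      fix k assume k: "cnt (Suc t) k > 0"
      show "(\<exists>n\<in>set (PP (Suc t)). key n = k) \<or> (\<forall>n\<in>set (PP (Suc t)). \<not> (lo n \<le> fst k \<and> snd k \<le> hi n))"
      proof (cases "k = key m")
        case True then show ?thesis using kn setP2 by auto
      next
        case False
        then have "cnt t k > 0" using k cS by simp
        then have "(\<exists>n\<in>set P. key n = k) \<or> (\<forall>n\<in>set P. \<not> (lo n \<le> fst k \<and> snd k \<le> hi n))" using D by blast
        then show ?thesis
        proof
          assume "\<exists>n\<in>set P. key n = k"
          then obtain n where "n \<in> set P" "key n = k" by blast
          then have "n \<in> Oth" using False setP by blast
          then show ?thesis using setP2 \<open>key n = k\<close> by blast
        next
          assume dd: "\<forall>n\<in>set P. \<not> (lo n \<le> fst k \<and> snd k \<le> hi n)"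
          then have "\<not> (lo n' \<le> fst k \<and> snd k \<le> hi n')" using mP n' by auto
          then show ?thesis using dd OP setP2 by blast
        qed
      qed
    qed
    have B1: "\<forall>k. real (cnt (Suc t) k) \<le> 3 + log 2 (real T)"
    proof
      fix k
      show "real (cnt (Suc t) k) \<le> 3 + log 2 (real T)"
      proof (cases "k = key m")
        case True
        have "real (Suc (cnt t (key m))) \<le> 2 + log 2 (real T)"
          using R_bound[OF Lpos T2 _ n'(4)] n' lm by simp
        then show ?thesis using True cS by simp
      next
        case False then show ?thesis using cS[of k] B[rule_format, of k] by simp
      qed
    qed
    show ?thesis using T1 A1 D1 B1 by blast
  next
    assume "\<exists>c1 c2. update L T m (guess m (pick h)) sg = [c1, c2] \<and> tiles (lo m) (hi m) [c1, c2] \<and>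
         V L c1 \<and> V L c2 \<and> R L T c1 0 \<and> R L T c2 0 \<and> real (Suc (cnt t (key m))) \<le> 3 + log 2 (real T)"
    then obtain c1 c2 where u: "update L T m (guess m (pick h)) sg = [c1, c2]" and tc: "tiles (lo m) (hi m) [c1, c2]"
      and cc: "V L c1" "V L c2" "R L T c1 0" "R L T c2 0" and bm: "real (Suc (cnt t (key m))) \<le> 3 + log 2 (real T)"
      by blast
    have c12: "lo c1 = lo m" "lo c1 < hi c1" "lo c2 = hi c1" "lo c2 < hi c2" "hi c2 = hi m" using tc by auto
    have k1: "key c1 \<noteq> key m" and k2: "key c2 \<noteq> key m" using c12 unfolding key_def by auto
    have z1: "cnt t (key c1) = 0" using new0[of c1] c12 k1 by simp
    have z2: "cnt t (key c2) = 0" using new0[of c2] c12 k2 by simp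
    have P2: "PP (Suc t) = take i P @ [c1, c2] @ drop (Suc i) P" using P' u by simp
    have setP2: "set (PP (Suc t)) = Oth \<union> {c1, c2}" unfolding P2 Oth_def by auto
    have T1: "tiles 0 1 (PP (Suc t))" unfolding P2 tiles_append using ta td ab tc by blast
    have A1: "\<forall>n\<in>set (PP (Suc t)). V L n \<and> R L T n (cnt (Suc t) (key n))"
    proof
      fix n assume "n \<in> set (PP (Suc t))"
      then have "n \<in> Oth \<or> n = c1 \<or> n = c2" using setP2 by blast
      then show "V L n \<and> R L T n (cnt (Suc t) (key n))"
      proof (elim disjE)
        assume nO: "n \<in> Oth"
        then have "cnt (Suc t) (key n) = cnt t (key n)" using cS Okey[OF nO] by simp
        then show ?thesis using A OP nO by auto
      next
        assume nc: "n = c1"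
        have "cnt (Suc t) (key c1) = cnt t (key c1)" using cS[of "key c1"] k1 by simp
        then have e: "cnt (Suc t) (key c1) = 0" using z1 by (rule trans)
        show ?thesis unfolding nc e using cc by simp
      next
        assume nc: "n = c2"
        have "cnt (Suc t) (key c2) = cnt t (key c2)" using cS[of "key c2"] k2 by simp
        then have e: "cnt (Suc t) (key c2) = 0" using z2 by (rule trans)
        show ?thesis unfolding nc e using cc by simp
      qed
    qed
    have D1: "\<forall>k. cnt (Suc t) k > 0 \<longrightarrow> (\<exists>n\<in>set (PP (Suc t)). key n = k) \<or> (\<forall>n\<in>set (PP (Suc t)). \<not> (lo n \<le> fst k \<and> snd k \<le> hi n))"
    proof (intro allI impI)
      fix k assume k: "cnt (Suc t) k > 0"
      show "(\<exists>n\<in>set (PP (Suc t)). key n = k) \<or> (\<forall>n\<in>set (PP (Suc t)). \<not> (lo n \<le> fst k \<and> snd k \<le> hi n))"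
      proof (cases "k = key m")
        case True
        have "\<forall>n\<in>set (PP (Suc t)). \<not> (lo n \<le> fst k \<and> snd k \<le> hi n)"
          using Onc setP2 c12 True unfolding key_def by auto
        then show ?thesis by blast
      next
        case False
        then have "cnt t k > 0" using k cS by simp
        then have "(\<exists>n\<in>set P. key n = k) \<or> (\<forall>n\<in>set P. \<not> (lo n \<le> fst k \<and> snd k \<le> hi n))" using D by blast
        then show ?thesis
        proof
          assume "\<exists>n\<in>set P. key n = k"
          then obtain n where "n \<in> set P" "key n = k" by blast
          then have "n \<in> Oth" using False setP by blast
          then show ?thesis using setP2 \<open>key n = k\<close> by blast
        next
          assume dd: "\<forall>n\<in>set P. \<not> (lo n \<le> fst k \<and> snd k \<le> hi n)"
          then have "\<not> (lo m \<le> fst k \<and> snd k \<le> hi m)" using mP by auto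
          then have "\<not> (lo c1 \<le> fst k \<and> snd k \<le> hi c1)" "\<not> (lo c2 \<le> fst k \<and> snd k \<le> hi c2)"
            using c12 by auto
          then show ?thesis using dd OP setP2 by blast
        qed
      qed
    qed
    have B1: "\<forall>k. real (cnt (Suc t) k) \<le> 3 + log 2 (real T)"
    proof
      fix k
      show "real (cnt (Suc t) k) \<le> 3 + log 2 (real T)"
      proof (cases "k = key m")
        case True then show ?thesis using bm cS by simp
      next
        case False then show ?thesis using cS[of k] B[rule_format, of k] by simp
      qed
    qed
    show ?thesis using T1 A1 D1 B1 by blast
  qed
qed

lemma final:
  assumes Cb: "card {t. t < T \<and> round_corrupted L T f X Cor pick t} \<le> C"
    and fr: "\<forall>x\<in>{0..1}. f x \<in> {0..L}"
  shows "(\<Sum>t | t < T \<and> in_corrupted_interval L T f X Cor pick t.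
         \<bar>f (ctx L T f X Cor pick t) - round_guess L T f X Cor pick t\<bar>)
       \<le> L * (real C * (3 + log 2 (real T)))"
proof -
  define S where "S = {t. t < T \<and> in_corrupted_interval L T f X Cor pick t}"
  define KC where "KC = ri ` {s. s < T \<and> round_corrupted L T f X Cor pick s}"
  define NN where "NN = 3 + log 2 (real T)"
  have NN0: "NN \<ge> 0" using T2 unfolding NN_def by simp
  have loss: "\<bar>f (ctx L T f X Cor pick t) - round_guess L T f X Cor pick t\<bar> \<le> L" for t
  proof -
    have x01: "0 \<le> ctx L T f X Cor pick t" "ctx L T f X Cor pick t \<le> 1"
      using Xr unfolding ctx_def by auto
    have tl: "tiles 0 1 (PP t)" using invar[of t] by blast
    have "find_node (PP t) (ctx L T f X Cor pick t) < length (PP t)"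
      using tiles_find[OF tl x01] by blast
    then have "cur_node L T f X Cor pick t \<in> set (PP t)" unfolding cur_node_def Let_def by simp
    then have "V L (cur_node L T f X Cor pick t)" using invar[of t] by blast
    then have g: "0 \<le> round_guess L T f X Cor pick t \<and> round_guess L T f X Cor pick t \<le> L"
      unfolding round_guess_def using guess_range by blast
    have "f (ctx L T f X Cor pick t) \<in> {0..L}" using fr x01 by auto
    then show ?thesis using g by auto
  qed
  have finS: "finite S" unfolding S_def by simp
  have s1: "(\<Sum>t\<in>S. \<bar>f (ctx L T f X Cor pick t) - round_guess L T f X Cor pick t\<bar>) \<le> real (card S) * L"
    using sum_bounded_above[of S _ L] loss by simp
  have SU: "S = (\<Union>k\<in>KC. {t. t < T \<and> ri t = k})"
    unfolding S_def KC_def in_corrupted_interval_def by auto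
  have finK: "finite KC" unfolding KC_def by simp
  have "card S \<le> (\<Sum>k\<in>KC. card {t. t < T \<and> ri t = k})"
    unfolding SU by (rule card_UN_le[OF finK])
  then have "real (card S) \<le> (\<Sum>k\<in>KC. real (card {t. t < T \<and> ri t = k}))"
    by (metis of_nat_le_iff of_nat_sum)
  also have "\<dots> \<le> (\<Sum>k\<in>KC. NN)"
    using invar[of T] unfolding NN_def by (intro sum_mono) blast
  also have "\<dots> = real (card KC) * NN" by simp
  also have "\<dots> \<le> real C * NN"
  proof -
    have "card KC \<le> card {s. s < T \<and> round_corrupted L T f X Cor pick s}"
      unfolding KC_def by (rule card_image_le) simp
    then have "real (card KC) \<le> real C" using Cb by simp
    then show ?thesis using NN0 by (rule mult_right_mono)
  qed
  finally have cS: "real (card S) \<le> real C * NN" .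
  have "real (card S) * L \<le> real C * NN * L" using cS Lpos by (intro mult_right_mono) auto
  then show ?thesis using s1 unfolding S_def NN_def by (simp add: algebra_simps)
qed

end

theorem lemma25:
  "\<exists>K::real. \<forall>(L::real) (T::nat) (C::nat) (f::real \<Rightarrow> real) X Cor pick.
     L > 0 \<longrightarrow> T \<ge> 2 \<longrightarrow>
     L-lipschitz_on {0..1} f \<longrightarrow> (\<forall>x\<in>{0..1}. f x \<in> {0..L}) \<longrightarrow>
     (\<forall>h. X h \<in> {0..1}) \<longrightarrow>
     card {t. t < T \<and> round_corrupted L T f X Cor pick t} \<le> C \<longrightarrow>
     (\<Sum>t | t < T \<and> in_corrupted_interval L T f X Cor pick t.
         \<bar>f (ctx L T f X Cor pick t) - round_guess L T f X Cor pick t\<bar>)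
       \<le> K * L * (real C * ln (real T))"
proof (intro exI[of _ "4 / ln 2"] allI impI)
  fix L :: real and T C :: nat and f :: "real \<Rightarrow> real" and X Cor pick
  assume L: "L > 0" and T: "T \<ge> 2" and fr: "\<forall>x\<in>{0..1}. f x \<in> {0..L}" and Xr: "\<forall>h. X h \<in> {0..1}"
    and Cb: "card {t. t < T \<and> round_corrupted L T f X Cor pick t} \<le> C"
  have main: "(\<Sum>t | t < T \<and> in_corrupted_interval L T f X Cor pick t.
         \<bar>f (ctx L T f X Cor pick t) - round_guess L T f X Cor pick t\<bar>)
       \<le> L * (real C * (3 + log 2 (real T)))"
    using final[OF L T Xr Cb fr] .
  have l2: "ln (2::real) > 0" by simp
  have lT: "ln (real T) \<ge> ln 2" using T by simp
  have "3 + log 2 (real T) = 3 + ln (real T) / ln 2" by (simp add: log_def)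
  also have "\<dots> \<le> 4 / ln 2 * ln (real T)"
  proof -
    have "3 \<le> 3 * (ln (real T) / ln 2)" using lT l2 by (simp add: le_divide_eq)
    then show ?thesis by (simp add: field_simps)
  qed
  finally have b: "3 + log 2 (real T) \<le> 4 / ln 2 * ln (real T)" .
  have "L * (real C * (3 + log 2 (real T))) \<le> L * (real C * (4 / ln 2 * ln (real T)))"
    using b L by (intro mult_left_mono) auto
  also have "\<dots> = 4 / ln 2 * L * (real C * ln (real T))" by (simp add: algebra_simps)
  finally show "(\<Sum>t | t < T \<and> in_corrupted_interval L T f X Cor pick t.
         \<bar>f (ctx L T f X Cor pick t) - round_guess L T f X Cor pick t\<bar>)
       \<le> 4 / ln 2 * L * (real C * ln (real T))" using main by linarith
qed


end
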